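(* (Quantum Efron–Stein decomposition.) Let $\varrho=\rho_1\otimes\cdots\otimes\rho_n$ be a product state on $\mathcal K=\bigotimes_{i=1}^n\mathcal H_i$ (finite-dimensional Hilbert spaces). Then any observable $X$ on $\mathcal K$ has a unique decomposition $X=\sum_{J\subseteq[n]}X^{=J}$ into observables $X^{=J}$ such that: (1) $X^{=J}$ acts nontrivially only on the subsystems in $J$; (2) $\mathcal E_jX^{=J}=0$ for all $j\in J$. Moreover: (3) for every $J$, the map $X\mapsto X^{=J}$ is linear and $\sum_{I\subseteq J}X^{=I}=\mathcal E_{\overline J}X$; (4) for $I\ne J$, $\langle X^{=I},X^{=J}\rangle_\varrho=0$.
   Context: For $i\in[n]$, $\mathcal E_iY=\mathrm{Tr}_i[(\rho_i\otimes I)Y]$, regarded as an operator on $\mathcal K$ by tensoring with the identity on $\mathcal H_i$; for $I\subseteq[n]$, $\mathcal E_I=\prod_{i\in I}\mathcal E_i$ (these maps commute; $\mathcal E_\emptyset$ is the identity map), and $\overline J=[n]\setminus J$. "Acts nontrivially only on the subsystems in $J$" means the operator is of the form $Y\otimes I_{\overline J}$ with $Y$ acting on $\bigotimes_{j\in J}\mathcal H_j$. The inner product is $\langle Y,Z\rangle_\varrho=\mathrm{Tr}[\varrho Y^\dagger Z]$. *)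

theory Defs
  imports Complex_Main "HOL-Library.FuncSet"
begin

text \<open>Subsystem i (for i < n) is the Hilbert space H_i = C^(d i) with
standard basis indexed by {..<d i}. The composite space K = H_0 (x) ... (x) H_(n-1)
has orthonormal basis indexed by the tuples in idx d n (extensional functions on {..<n}).
An operator on K is represented by its matrix entries: a function of two basis indices,
required to vanish outside idx d n.  Operators on a single H_i are functions
nat => nat => complex vanishing outside {..<d i} x {..<d i}.
Subsystems are numbered 0..n-1, so [n] is {..<n}.\<close>

type_synonym qop = "(nat \<Rightarrow> nat) \<Rightarrow> (nat \<Rightarrow> nat) \<Rightarrow> complex"

definition idx :: "(nat \<Rightarrow> nat) \<Rightarrow> nat \<Rightarrow> (nat \<Rightarrow> nat) set" where
  "idx d n = PiE {..<n} (\<lambda>i. {..<d i})"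

definition is_op :: "(nat \<Rightarrow> nat) \<Rightarrow> nat \<Rightarrow> qop \<Rightarrow> bool" where
  "is_op d n X \<longleftrightarrow> (\<forall>a b. (a \<notin> idx d n \<or> b \<notin> idx d n) \<longrightarrow> X a b = 0)"

definition observable :: "(nat \<Rightarrow> nat) \<Rightarrow> nat \<Rightarrow> qop \<Rightarrow> bool" where
  "observable d n X \<longleftrightarrow> is_op d n X \<and> (\<forall>a b. X a b = cnj (X b a))"

definition density :: "nat \<Rightarrow> (nat \<Rightarrow> nat \<Rightarrow> complex) \<Rightarrow> bool" where
  "density m \<rho> \<longleftrightarrow>
     (\<forall>k l. (k \<ge> m \<or> l \<ge> m) \<longrightarrow> \<rho> k l = 0) \<and>
     (\<forall>k l. \<rho> k l = cnj (\<rho> l k)) \<and>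
     (\<forall>v :: nat \<Rightarrow> complex. 0 \<le> Re (\<Sum>k<m. \<Sum>l<m. cnj (v k) * \<rho> k l * v l)) \<and>
     (\<Sum>k<m. \<rho> k k) = 1"

definition prod_state :: "(nat \<Rightarrow> nat) \<Rightarrow> nat \<Rightarrow> (nat \<Rightarrow> nat \<Rightarrow> nat \<Rightarrow> complex) \<Rightarrow> qop" where
  "prod_state d n \<rho> = (\<lambda>a b. if a \<in> idx d n \<and> b \<in> idx d n
                               then (\<Prod>i<n. \<rho> i (a i) (b i)) else 0)"

text \<open>E_i Y = Tr_i[(rho_i (x) I) Y], tensored with the identity on H_i.
Entry (a,b) equals [a_i = b_i] * sum_(k,l) rho_i(k,l) * Y(a[i:=l], b[i:=k]).\<close>
definition cond_exp :: "(nat \<Rightarrow> nat) \<Rightarrow> nat \<Rightarrow> (nat \<Rightarrow> nat \<Rightarrow> nat \<Rightarrow> complex) \<Rightarrow> nat \<Rightarrow> qop \<Rightarrow> qop" where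
  "cond_exp d n \<rho> i Y = (\<lambda>a b.
     if a \<in> idx d n \<and> b \<in> idx d n \<and> a i = b i
     then (\<Sum>k<d i. \<Sum>l<d i. \<rho> i k l * Y (a(i := l)) (b(i := k)))
     else 0)"

text \<open>E_I = product of the E_i for i in I (they commute; E_{} is the identity).\<close>
definition cond_exp_set :: "(nat \<Rightarrow> nat) \<Rightarrow> nat \<Rightarrow> (nat \<Rightarrow> nat \<Rightarrow> nat \<Rightarrow> complex) \<Rightarrow> nat set \<Rightarrow> qop \<Rightarrow> qop" where
  "cond_exp_set d n \<rho> I Y = foldr (cond_exp d n \<rho>) (sorted_list_of_set I) Y"

text \<open>X acts nontrivially only on the subsystems in J: X = Y (x) I_{[n]-J}
with Y an operator on the tensor product of the H_j, j in J (indexed by idx d J-tuples).\<close>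
definition acts_only_on :: "(nat \<Rightarrow> nat) \<Rightarrow> nat \<Rightarrow> nat set \<Rightarrow> qop \<Rightarrow> bool" where
  "acts_only_on d n J X \<longleftrightarrow> is_op d n X \<and>
     (\<exists>Y :: qop. \<forall>a \<in> idx d n. \<forall>b \<in> idx d n.
        X a b = (if (\<forall>i \<in> {..<n} - J. a i = b i)
                 then Y (restrict a J) (restrict b J) else 0))"

text \<open>Inner product <Y,Z>_varrho = Tr[varrho Y^dagger Z].\<close>
definition inner_state :: "(nat \<Rightarrow> nat) \<Rightarrow> nat \<Rightarrow> qop \<Rightarrow> qop \<Rightarrow> qop \<Rightarrow> complex" where
  "inner_state d n \<sigma> Y Z =
     (\<Sum>a\<in>idx d n. \<Sum>b\<in>idx d n. \<Sum>c\<in>idx d n. \<sigma> a b * cnj (Y c b) * Z c a)"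

end

theory Submission
  imports Defs
begin


lemma sum_Pow_insert:
  assumes "finite A" "k \<notin> A"
  shows "(\<Sum>I\<in>Pow (insert k A). h I) = (\<Sum>I\<in>Pow A. h I) + (\<Sum>I\<in>Pow A. h (insert k I))"
proof -
  have "(\<Sum>I\<in>Pow (insert k A). h I) = (\<Sum>I\<in>Pow A. h I) + (\<Sum>I\<in>insert k ` Pow A. h I)"
    unfolding Pow_insert by (rule sum.union_disjoint) (use assms in auto)
  also have "(\<Sum>I\<in>insert k ` Pow A. h I) = (\<Sum>I\<in>Pow A. h (insert k I))"
    by (subst sum.reindex) (use assms in \<open>auto intro!: inj_onI simp: o_def\<close>)
  finally show ?thesis .
qed

lemma card_ins_diff1:
  assumes "finite I" "k \<notin> I" "J \<subseteq> I"
  shows "card (insert k I - J) = Suc (card (I - J))"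
proof -
  have "insert k I - J = insert k (I - J)" using assms by auto
  thus ?thesis using assms by simp
qed

lemma card_ins_diff2:
  assumes "k \<notin> I"
  shows "card (insert k I - insert k J) = card (I - J)"
proof -
  have "insert k I - insert k J = I - J" using assms by auto
  thus ?thesis by simp
qed

lemma moebius_A:
  fixes f :: "nat set \<Rightarrow> complex"
  assumes "finite K"
  shows "(\<Sum>I\<in>Pow K. (-1)^card (K - I) * (\<Sum>J\<in>Pow I. f J)) = f K"
  using assms
proof (induction K arbitrary: f rule: finite_induct)
  case empty
  then show ?case by simp
next
  case (insert k K)
  have fin: "\<And>I. I \<in> Pow K \<Longrightarrow> finite I" using insert.hyps(1) finite_subset by auto
  have "(\<Sum>I\<in>Pow (insert k K). (-1)^card (insert k K - I) * (\<Sum>J\<in>Pow I. f J))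
     = (\<Sum>I\<in>Pow K. (-1)^card (insert k K - I) * (\<Sum>J\<in>Pow I. f J))
     + (\<Sum>I\<in>Pow K. (-1)^card (insert k K - insert k I) * (\<Sum>J\<in>Pow (insert k I). f J))"
    by (rule sum_Pow_insert) (use insert in auto)
  also have "(\<Sum>I\<in>Pow K. (-1)^card (insert k K - I) * (\<Sum>J\<in>Pow I. f J))
      = - (\<Sum>I\<in>Pow K. (-1)^card (K - I) * (\<Sum>J\<in>Pow I. f J))"
    by (simp add: sum_negf[symmetric], rule sum.cong, simp,
        subst card_ins_diff1, use insert in auto)
  also have "(\<Sum>I\<in>Pow K. (-1)^card (insert k K - insert k I) * (\<Sum>J\<in>Pow (insert k I). f J))
     = (\<Sum>I\<in>Pow K. (-1)^card (K - I) * (\<Sum>J\<in>Pow I. f J))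
     + (\<Sum>I\<in>Pow K. (-1)^card (K - I) * (\<Sum>J\<in>Pow I. f (insert k J)))"
  proof -
    have "\<And>I. I \<in> Pow K \<Longrightarrow> (-1)^card (insert k K - insert k I) * (\<Sum>J\<in>Pow (insert k I). f J)
       = (-1)^card (K - I) * (\<Sum>J\<in>Pow I. f J) + (-1)^card (K - I) * (\<Sum>J\<in>Pow I. f (insert k J))"
    proof -
      fix I assume I: "I \<in> Pow K"
      have "k \<notin> I" using I insert by auto
      then show "?thesis I"
        using fin[OF I] insert.hyps
        by (simp add: sum_Pow_insert card_ins_diff2 distrib_left)
    qed
    then show ?thesis by (simp add: sum.distrib)
  qed
  finally show ?case using insert.IH[of "\<lambda>J. f (insert k J)"] by simp
qed

lemma moebius_B:
  fixes g :: "nat set \<Rightarrow> complex"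
  assumes "finite K"
  shows "(\<Sum>I\<in>Pow K. (\<Sum>J\<in>Pow I. (-1)^card (I - J) * g J)) = g K"
  using assms
proof (induction K arbitrary: g rule: finite_induct)
  case empty
  then show ?case by simp
next
  case (insert k K)
  have fin: "\<And>I. I \<in> Pow K \<Longrightarrow> finite I" using insert.hyps(1) finite_subset by auto
  have "(\<Sum>I\<in>Pow (insert k K). (\<Sum>J\<in>Pow I. (-1)^card (I - J) * g J))
     = (\<Sum>I\<in>Pow K. (\<Sum>J\<in>Pow I. (-1)^card (I - J) * g J))
     + (\<Sum>I\<in>Pow K. (\<Sum>J\<in>Pow (insert k I). (-1)^card (insert k I - J) * g J))"
    by (rule sum_Pow_insert) (use insert in auto)
  also have "(\<Sum>I\<in>Pow K. (\<Sum>J\<in>Pow (insert k I). (-1)^card (insert k I - J) * g J))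
     = (\<Sum>I\<in>Pow K. - (\<Sum>J\<in>Pow I. (-1)^card (I - J) * g J) + (\<Sum>J\<in>Pow I. (-1)^card (I - J) * g (insert k J)))"
  proof (rule sum.cong)
    fix I assume I: "I \<in> Pow K"
    have kI: "k \<notin> I" using I insert by auto
    have "(\<Sum>J\<in>Pow (insert k I). (-1)^card (insert k I - J) * g J)
      = (\<Sum>J\<in>Pow I. (-1)^card (insert k I - J) * g J) + (\<Sum>J\<in>Pow I. (-1)^card (insert k I - insert k J) * g (insert k J))"
      by (rule sum_Pow_insert) (use fin[OF I] kI in auto)
    also have "(\<Sum>J\<in>Pow I. (-1)^card (insert k I - J) * g J) = - (\<Sum>J\<in>Pow I. (-1)^card (I - J) * g J)"
      by (simp add: sum_negf[symmetric], rule sum.cong, simp,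
        subst card_ins_diff1, use fin[OF I] kI in auto)
    also have "(\<Sum>J\<in>Pow I. (-1)^card (insert k I - insert k J) * g (insert k J)) = (\<Sum>J\<in>Pow I. (-1)^card (I - J) * g (insert k J))"
      using kI by (simp add: card_ins_diff2)
    finally show "(\<Sum>J\<in>Pow (insert k I). (-1)^card (insert k I - J) * g J)
     = - (\<Sum>J\<in>Pow I. (-1)^card (I - J) * g J) + (\<Sum>J\<in>Pow I. (-1)^card (I - J) * g (insert k J))" .
  qed simp
  finally show ?case using insert.IH[of "\<lambda>J. g (insert k J)"] by (simp add: sum.distrib sum_subtractf)
qed

lemma moebius_C:
  fixes h :: "nat set \<Rightarrow> complex"
  assumes "finite J" "j \<in> J"
  shows "(\<Sum>I\<in>Pow J. (-1)^card (J - I) * h (I - {j})) = 0"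
proof -
  define K where "K = J - {j}"
  have J: "J = insert j K" "j \<notin> K" "finite K" using assms K_def by auto
  have fin: "\<And>I. I \<in> Pow K \<Longrightarrow> finite I" using J finite_subset by auto
  have "(\<Sum>I\<in>Pow J. (-1)^card (J - I) * h (I - {j}))
     = (\<Sum>I\<in>Pow K. (-1)^card (insert j K - I) * h (I - {j}))
     + (\<Sum>I\<in>Pow K. (-1)^card (insert j K - insert j I) * h (insert j I - {j}))"
    unfolding J(1) by (rule sum_Pow_insert) (use J in auto)
  also have "(\<Sum>I\<in>Pow K. (-1)^card (insert j K - I) * h (I - {j})) = - (\<Sum>I\<in>Pow K. (-1)^card (K - I) * h I)"
  proof -
    have "\<And>I. I \<in> Pow K \<Longrightarrow> (-1)^card (insert j K - I) * h (I - {j}) = - ((-1)^card (K - I) * h I)"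
    proof -
      fix I assume I: "I \<in> Pow K"
      have "I - {j} = I" using I J by auto
      then show "?thesis I" using card_ins_diff1[of K j I] J I by simp
    qed
    then show ?thesis by (simp add: sum_negf[symmetric])
  qed
  also have "(\<Sum>I\<in>Pow K. (-1)^card (insert j K - insert j I) * h (insert j I - {j})) = (\<Sum>I\<in>Pow K. (-1)^card (K - I) * h I)"
  proof (rule sum.cong)
    fix I assume I: "I \<in> Pow K"
    have "insert j I - {j} = I" using I J by auto
    then show "(-1)^card (insert j K - insert j I) * h (insert j I - {j}) = (-1)^card (K - I) * h I"
      using J by (simp add: card_ins_diff2)
  qed simp
  finally show ?thesis by simp
qed



lemma swap4:
  "(\<Sum>k\<in>A. \<Sum>l\<in>B. \<Sum>k'\<in>C. \<Sum>l'\<in>D. f k l k' l') = (\<Sum>k'\<in>C. \<Sum>l'\<in>D. \<Sum>k\<in>A. \<Sum>l\<in>B. f k l k' l')"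
proof -
  have "(\<Sum>k\<in>A. \<Sum>l\<in>B. \<Sum>k'\<in>C. \<Sum>l'\<in>D. f k l k' l') = (\<Sum>k\<in>A. \<Sum>k'\<in>C. \<Sum>l'\<in>D. \<Sum>l\<in>B. f k l k' l')"
  proof (rule sum.cong[OF refl])
    fix k
    have "(\<Sum>l\<in>B. \<Sum>k'\<in>C. \<Sum>l'\<in>D. f k l k' l') = (\<Sum>k'\<in>C. \<Sum>l\<in>B. \<Sum>l'\<in>D. f k l k' l')" by (rule sum.swap)
    also have "\<dots> = (\<Sum>k'\<in>C. \<Sum>l'\<in>D. \<Sum>l\<in>B. f k l k' l')" by (rule sum.cong[OF refl], rule sum.swap)
    finally show "(\<Sum>l\<in>B. \<Sum>k'\<in>C. \<Sum>l'\<in>D. f k l k' l') = (\<Sum>k'\<in>C. \<Sum>l'\<in>D. \<Sum>l\<in>B. f k l k' l')" .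
  qed
  also have "\<dots> = (\<Sum>k'\<in>C. \<Sum>k\<in>A. \<Sum>l'\<in>D. \<Sum>l\<in>B. f k l k' l')" by (rule sum.swap)
  also have "\<dots> = (\<Sum>k'\<in>C. \<Sum>l'\<in>D. \<Sum>k\<in>A. \<Sum>l\<in>B. f k l k' l')" by (rule sum.cong[OF refl], rule sum.swap)
  finally show ?thesis .
qed

lemma idx_upd: "a \<in> idx d n \<Longrightarrow> i < n \<Longrightarrow> l < d i \<Longrightarrow> a(i := l) \<in> idx d n"
  unfolding idx_def by (auto simp: PiE_def extensional_def Pi_def)

lemma idx_fin: "finite (idx d n)"
  unfolding idx_def by (simp add: finite_PiE)

lemma E_lin: "cond_exp d n \<rho> i (\<lambda>a b. r * X a b + s * Z a b) =
   (\<lambda>a b. r * cond_exp d n \<rho> i X a b + s * cond_exp d n \<rho> i Z a b)"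
  unfolding cond_exp_def
  by (auto simp: sum_distrib_left sum.distrib algebra_simps intro!: ext)

lemma swap3:
  "(\<Sum>k\<in>A. \<Sum>l\<in>B. \<Sum>t\<in>C. f k l t) = (\<Sum>t\<in>C. \<Sum>k\<in>A. \<Sum>l\<in>B. f k l t)"
proof -
  have "(\<Sum>k\<in>A. \<Sum>l\<in>B. \<Sum>t\<in>C. f k l t) = (\<Sum>k\<in>A. \<Sum>t\<in>C. \<Sum>l\<in>B. f k l t)"
    by (rule sum.cong[OF refl], rule sum.swap)
  also have "\<dots> = (\<Sum>t\<in>C. \<Sum>k\<in>A. \<Sum>l\<in>B. f k l t)" by (rule sum.swap)
  finally show ?thesis .
qed

lemma E_sum: "cond_exp d n \<rho> i (\<lambda>a b. \<Sum>t\<in>A. c t * F t a b) =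
   (\<lambda>a b. \<Sum>t\<in>A. c t * cond_exp d n \<rho> i (F t) a b)"
proof (intro ext)
  fix a b
  show "cond_exp d n \<rho> i (\<lambda>a b. \<Sum>t\<in>A. c t * F t a b) a b = (\<Sum>t\<in>A. c t * cond_exp d n \<rho> i (F t) a b)"
  proof (cases "a \<in> idx d n \<and> b \<in> idx d n \<and> a i = b i")
    case True
    then show ?thesis
      unfolding cond_exp_def
      apply (simp add: sum_distrib_left)
      apply (subst swap3)
      apply (simp add: algebra_simps)
      done
  next
    case False
    then have "cond_exp d n \<rho> i G a b = 0" for G unfolding cond_exp_def by auto
    then show ?thesis by simp
  qed
qed

lemma E_zero: "cond_exp d n \<rho> i (\<lambda>a b. 0) = (\<lambda>a b. 0)"
  unfolding cond_exp_def by (auto intro!: ext)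

lemma E_is_op: "is_op d n (cond_exp d n \<rho> i Y)"
  unfolding is_op_def cond_exp_def by auto

lemma E_E:
  assumes "i \<noteq> j" "i < n" "j < n"
  shows "cond_exp d n \<rho> i (cond_exp d n \<rho> j Y) a b =
    (if a \<in> idx d n \<and> b \<in> idx d n \<and> a i = b i \<and> a j = b j then
      (\<Sum>k<d i. \<Sum>l<d i. \<Sum>k'<d j. \<Sum>l'<d j. \<rho> i k l * \<rho> j k' l' * Y (a(i:=l, j:=l')) (b(i:=k, j:=k')))
     else 0)"
  using assms
  by (auto simp: cond_exp_def idx_upd sum_distrib_left mult.assoc intro!: sum.cong)

lemma E_commute:
  assumes "i < n" "j < n"
  shows "cond_exp d n \<rho> i (cond_exp d n \<rho> j Y) = cond_exp d n \<rho> j (cond_exp d n \<rho> i Y)"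
proof (cases "i = j")
  case False
  show ?thesis
  proof (intro ext)
    fix a b
    show "cond_exp d n \<rho> i (cond_exp d n \<rho> j Y) a b = cond_exp d n \<rho> j (cond_exp d n \<rho> i Y) a b"
      using False assms
      apply (simp add: E_E)
      apply (subst swap4)
      apply (auto simp: fun_upd_twist mult.commute intro!: sum.cong)
      done
  qed
qed simp



definition qes :: "(nat \<Rightarrow> nat) \<Rightarrow> nat \<Rightarrow> (nat \<Rightarrow> nat \<Rightarrow> nat \<Rightarrow> complex) \<Rightarrow> qop \<Rightarrow> nat set \<Rightarrow> qop" where
  "qes d n \<rho> X J = (\<lambda>a b. \<Sum>I\<in>Pow J. (-1)^card (J - I) * cond_exp_set d n \<rho> ({..<n} - I) X a b)"

context
  fixes d :: "nat \<Rightarrow> nat" and n :: nat and \<rho> :: "nat \<Rightarrow> nat \<Rightarrow> nat \<Rightarrow> complex"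
  assumes states: "\<forall>i<n. density (d i) (\<rho> i)"
begin

lemma tr1: "i < n \<Longrightarrow> (\<Sum>k<d i. \<rho> i k k) = 1"
  using states unfolding density_def by blast

lemma herm: "i < n \<Longrightarrow> \<rho> i k l = cnj (\<rho> i l k)"
  using states unfolding density_def by blast

lemma herm': "i < n \<Longrightarrow> cnj (\<rho> i k l) = \<rho> i l k"
  using herm[of i l k] by simp

lemma obs_cnj: "observable d n X \<Longrightarrow> cnj (X b a) = X a b"
  unfolding observable_def by (metis complex_cnj_cnj)

lemma dpos: "i < n \<Longrightarrow> 0 < d i"
  using tr1[of i] by (cases "d i") auto

lemma E_obs:
  assumes "i < n" "observable d n X"
  shows "observable d n (cond_exp d n \<rho> i X)"
  unfolding observable_def
proof (intro conjI allI)
  show "is_op d n (cond_exp d n \<rho> i X)" by (rule E_is_op)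
  fix a b
  show "cond_exp d n \<rho> i X a b = cnj (cond_exp d n \<rho> i X b a)"
  proof (cases "a \<in> idx d n \<and> b \<in> idx d n \<and> a i = b i")
    case True
    have "cnj (cond_exp d n \<rho> i X b a) = cnj (\<Sum>k<d i. \<Sum>l<d i. \<rho> i k l * X (b(i:=l)) (a(i:=k)))"
      using True unfolding cond_exp_def by simp
    also have "\<dots> = (\<Sum>k<d i. \<Sum>l<d i. cnj (\<rho> i k l) * cnj (X (b(i:=l)) (a(i:=k))))"
      by simp
    also have "\<dots> = (\<Sum>k<d i. \<Sum>l<d i. \<rho> i l k * X (a(i:=k)) (b(i:=l)))"
      by (simp only: herm'[OF assms(1)] obs_cnj[OF assms(2)])
    also have "\<dots> = (\<Sum>l<d i. \<Sum>k<d i. \<rho> i l k * X (a(i:=k)) (b(i:=l)))"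
      by (rule sum.swap)
    also have "\<dots> = cond_exp d n \<rho> i X a b"
      using True unfolding cond_exp_def by simp
    finally show ?thesis by simp
  next
    case False
    then show ?thesis unfolding cond_exp_def by auto
  qed
qed

lemma aoo_full: "is_op d n X \<Longrightarrow> acts_only_on d n {..<n} X"
  unfolding acts_only_on_def
proof (intro conjI, assumption, intro exI[of _ X] ballI)
  fix a b assume "a \<in> idx d n" "b \<in> idx d n"
  then have "restrict a {..<n} = a" "restrict b {..<n} = b"
    unfolding idx_def by (auto simp: PiE_def extensional_restrict)
  then show "X a b = (if \<forall>i\<in>{..<n} - {..<n}. a i = b i then X (restrict a {..<n}) (restrict b {..<n}) else 0)"
    by simp
qed

lemma aoo_E_in:
  assumes "i < n" "i \<in> J" "acts_only_on d n J Z"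
  shows "acts_only_on d n (J - {i}) (cond_exp d n \<rho> i Z)"
proof -
  obtain Y where Y: "\<forall>a\<in>idx d n. \<forall>b\<in>idx d n. Z a b = (if (\<forall>m\<in>{..<n} - J. a m = b m)
                 then Y (restrict a J) (restrict b J) else 0)"
    using assms(3) unfolding acts_only_on_def by blast
  define Y' where "Y' = (\<lambda>a' b'. \<Sum>k<d i. \<Sum>l<d i. \<rho> i k l * Y (a'(i:=l)) (b'(i:=k)))"
  show ?thesis
    unfolding acts_only_on_def
  proof (intro conjI E_is_op exI[of _ Y'] ballI)
    fix a b assume a: "a \<in> idx d n" and b: "b \<in> idx d n"
    show "cond_exp d n \<rho> i Z a b = (if \<forall>m\<in>{..<n} - (J - {i}). a m = b m
        then Y' (restrict a (J - {i})) (restrict b (J - {i})) else 0)"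
    proof (cases "a i = b i")
      case False
      then show ?thesis unfolding cond_exp_def using assms by auto
    next
      case True
      have agr: "(\<forall>m\<in>{..<n} - J. (a(i:=l)) m = (b(i:=k)) m) \<longleftrightarrow> (\<forall>m\<in>{..<n} - (J - {i}). a m = b m)" for k l
        using True assms by auto
      have rs: "restrict (c(i:=l)) J = (restrict c (J - {i}))(i:=l)" for c :: "nat \<Rightarrow> nat" and l
        using assms by (auto simp: restrict_def)
      have "cond_exp d n \<rho> i Z a b = (\<Sum>k<d i. \<Sum>l<d i. \<rho> i k l * Z (a(i:=l)) (b(i:=k)))"
        using a b True unfolding cond_exp_def by simp
      also have "\<dots> = (\<Sum>k<d i. \<Sum>l<d i. \<rho> i k l * (if \<forall>m\<in>{..<n} - (J - {i}). a m = b m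
         then Y ((restrict a (J - {i}))(i:=l)) ((restrict b (J - {i}))(i:=k)) else 0))"
      proof (intro sum.cong refl)
        fix k l assume k: "k \<in> {..<d i}" and l: "l \<in> {..<d i}"
        have "a(i:=l) \<in> idx d n" "b(i:=k) \<in> idx d n" using a b k l assms(1) idx_upd by auto
        then have "Z (a(i:=l)) (b(i:=k)) = (if (\<forall>m\<in>{..<n} - J. (a(i:=l)) m = (b(i:=k)) m)
                 then Y (restrict (a(i:=l)) J) (restrict (b(i:=k)) J) else 0)" using Y by blast
        then show "\<rho> i k l * Z (a(i:=l)) (b(i:=k)) = \<rho> i k l * (if \<forall>m\<in>{..<n} - (J - {i}). a m = b m
         then Y ((restrict a (J - {i}))(i:=l)) ((restrict b (J - {i}))(i:=k)) else 0)"
          by (simp only: agr rs)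
      qed
      also have "\<dots> = (if \<forall>m\<in>{..<n} - (J - {i}). a m = b m
        then Y' (restrict a (J - {i})) (restrict b (J - {i})) else 0)"
      proof (cases "\<forall>m\<in>{..<n} - (J - {i}). a m = b m")
        case True
        then show ?thesis unfolding Y'_def by simp
      next
        case False
        show ?thesis unfolding if_not_P[OF False] by simp
      qed
      finally show ?thesis .
    qed
  qed
qed

lemma aoo_E_notin:
  assumes "i < n" "i \<notin> J" "acts_only_on d n J Z"
  shows "cond_exp d n \<rho> i Z = Z"
proof (intro ext)
  fix a b
  obtain Y where Y: "\<forall>a\<in>idx d n. \<forall>b\<in>idx d n. Z a b = (if (\<forall>m\<in>{..<n} - J. a m = b m)
                 then Y (restrict a J) (restrict b J) else 0)"
    and op: "is_op d n Z"
    using assms(3) unfolding acts_only_on_def by blast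
  show "cond_exp d n \<rho> i Z a b = Z a b"
  proof (cases "a \<in> idx d n \<and> b \<in> idx d n")
    case False
    then show ?thesis using op unfolding cond_exp_def is_op_def by auto
  next
    case ab: True
    show ?thesis
    proof (cases "a i = b i")
      case False
      then show ?thesis using Y ab assms unfolding cond_exp_def by auto
    next
      case True
      have agr: "(\<forall>m\<in>{..<n} - J. (a(i:=l)) m = (b(i:=k)) m) \<longleftrightarrow> (l = k \<and> (\<forall>m\<in>{..<n} - J. a m = b m))" for k l
        using True assms by auto
      have rs: "restrict (c(i:=l)) J = restrict c J" for c :: "nat \<Rightarrow> nat" and l
        using assms by (auto simp: restrict_def)
      have zz: "Z (a(i:=l)) (b(i:=k)) = (if l = k then Z a b else 0)" if kl: "k < d i" "l < d i" for k l
      proof -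
        have "a(i:=l) \<in> idx d n" "b(i:=k) \<in> idx d n" using ab kl assms(1) idx_upd by auto
        then have "Z (a(i:=l)) (b(i:=k)) = (if (\<forall>m\<in>{..<n} - J. (a(i:=l)) m = (b(i:=k)) m)
                 then Y (restrict (a(i:=l)) J) (restrict (b(i:=k)) J) else 0)" using Y by blast
        also have "\<dots> = (if l = k \<and> (\<forall>m\<in>{..<n} - J. a m = b m) then Y (restrict a J) (restrict b J) else 0)"
          by (simp only: agr rs)
        also have "\<dots> = (if l = k then Z a b else 0)" using Y ab by auto
        finally show ?thesis .
      qed
      have "cond_exp d n \<rho> i Z a b = (\<Sum>k<d i. \<Sum>l<d i. \<rho> i k l * Z (a(i:=l)) (b(i:=k)))"
        using ab True unfolding cond_exp_def by simp
      also have "\<dots> = (\<Sum>k<d i. \<Sum>l<d i. \<rho> i k l * (if l = k then Z a b else 0))"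
        by (auto simp: zz intro!: sum.cong)
      also have "\<dots> = (\<Sum>k<d i. \<rho> i k k) * Z a b"
        by (simp add: sum_distrib_right if_distrib cong: if_cong)
      also have "\<dots> = Z a b" using tr1[OF assms(1)] by simp
      finally show ?thesis .
    qed
  qed
qed

lemma E_idem:
  assumes "i < n" "is_op d n Y"
  shows "cond_exp d n \<rho> i (cond_exp d n \<rho> i Y) = cond_exp d n \<rho> i Y"
proof -
  have "acts_only_on d n ({..<n} - {i}) (cond_exp d n \<rho> i Y)"
    using aoo_E_in[OF assms(1) _ aoo_full[OF assms(2)]] assms(1) by simp
  then show ?thesis using aoo_E_notin[OF assms(1), of "{..<n} - {i}"] by simp
qed


lemma aoo_mono:
  assumes "acts_only_on d n I Z" "I \<subseteq> J" "J \<subseteq> {..<n}"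
  shows "acts_only_on d n J Z"
proof -
  obtain Y where Y: "\<forall>a\<in>idx d n. \<forall>b\<in>idx d n. Z a b = (if (\<forall>m\<in>{..<n} - I. a m = b m)
                 then Y (restrict a I) (restrict b I) else 0)"
    and op: "is_op d n Z"
    using assms(1) unfolding acts_only_on_def by blast
  define Y' where "Y' = (\<lambda>a' b'. if (\<forall>m\<in>J - I. a' m = b' m) then Y (restrict a' I) (restrict b' I) else (0::complex))"
  show ?thesis
    unfolding acts_only_on_def
  proof (intro conjI op exI[of _ Y'] ballI)
    fix a b assume a: "a \<in> idx d n" and b: "b \<in> idx d n"
    have r: "restrict (restrict c J) I = restrict c I" for c :: "nat \<Rightarrow> nat"
      using assms(2) by (auto simp: restrict_def intro!: ext)
    have e: "(\<forall>m\<in>{..<n} - I. a m = b m) \<longleftrightarrow> (\<forall>m\<in>{..<n} - J. a m = b m) \<and> (\<forall>m\<in>J - I. restrict a J m = restrict b J m)"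
      using assms(2,3) by auto
    show "Z a b = (if \<forall>m\<in>{..<n} - J. a m = b m then Y' (restrict a J) (restrict b J) else 0)"
    proof -
      have z: "Z a b = (if \<forall>m\<in>{..<n} - I. a m = b m then Y (restrict a I) (restrict b I) else 0)"
        using Y a b by blast
      show ?thesis unfolding z e Y'_def r by simp
    qed
  qed
qed

lemma aoo_comb:
  assumes "finite A" "\<forall>t\<in>A. acts_only_on d n J (F t)"
  shows "acts_only_on d n J (\<lambda>a b. \<Sum>t\<in>A. c t * F t a b)"
proof -
  have "\<forall>t\<in>A. \<exists>Y. \<forall>a\<in>idx d n. \<forall>b\<in>idx d n. F t a b = (if (\<forall>m\<in>{..<n} - J. a m = b m)
                 then Y (restrict a J) (restrict b J) else 0)"
    using assms(2) unfolding acts_only_on_def by blast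
  then obtain Yf where Y: "\<forall>t\<in>A. \<forall>a\<in>idx d n. \<forall>b\<in>idx d n. F t a b = (if (\<forall>m\<in>{..<n} - J. a m = b m)
                 then Yf t (restrict a J) (restrict b J) else 0)"
    by (metis (no_types))
  have op: "\<forall>t\<in>A. is_op d n (F t)" using assms(2) unfolding acts_only_on_def by blast
  show ?thesis
    unfolding acts_only_on_def
  proof (intro conjI exI[of _ "\<lambda>a' b'. \<Sum>t\<in>A. c t * Yf t a' b'"] ballI)
    show "is_op d n (\<lambda>a b. \<Sum>t\<in>A. c t * F t a b)"
      using op unfolding is_op_def by auto
    fix a b assume a: "a \<in> idx d n" and b: "b \<in> idx d n"
    have "(\<Sum>t\<in>A. c t * F t a b) = (\<Sum>t\<in>A. c t * (if (\<forall>m\<in>{..<n} - J. a m = b m)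
                 then Yf t (restrict a J) (restrict b J) else 0))"
      using Y a b by (intro sum.cong) auto
    also have "\<dots> = (if \<forall>m\<in>{..<n} - J. a m = b m then (\<Sum>t\<in>A. c t * Yf t (restrict a J) (restrict b J)) else 0)"
    proof (cases "\<forall>m\<in>{..<n} - J. a m = b m")
      case True then show ?thesis by simp
    next
      case False show ?thesis unfolding if_not_P[OF False] by simp
    qed
    finally show "(\<Sum>t\<in>A. c t * F t a b) = (if \<forall>m\<in>{..<n} - J. a m = b m then (\<Sum>t\<in>A. c t * Yf t (restrict a J) (restrict b J)) else 0)" .
  qed
qed

lemma ES_empty: "cond_exp_set d n \<rho> {} Y = Y"
  unfolding cond_exp_set_def by simp

lemma foldr_sum: "foldr (cond_exp d n \<rho>) xs (\<lambda>a b. \<Sum>t\<in>A. c t * F t a b) =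
   (\<lambda>a b. \<Sum>t\<in>A. c t * foldr (cond_exp d n \<rho>) xs (F t) a b)"
  by (induction xs) (simp_all add: E_sum)

lemma foldr_lin: "foldr (cond_exp d n \<rho>) xs (\<lambda>a b. r * X a b + s * Z a b) =
   (\<lambda>a b. r * foldr (cond_exp d n \<rho>) xs X a b + s * foldr (cond_exp d n \<rho>) xs Z a b)"
  by (induction xs) (simp_all add: E_lin)

lemma foldr_zero: "foldr (cond_exp d n \<rho>) xs (\<lambda>a b. 0) = (\<lambda>a b. 0)"
  by (induction xs) (simp_all add: E_zero)

lemma ES_sum: "cond_exp_set d n \<rho> S (\<lambda>a b. \<Sum>t\<in>A. c t * F t a b) =
   (\<lambda>a b. \<Sum>t\<in>A. c t * cond_exp_set d n \<rho> S (F t) a b)"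
  unfolding cond_exp_set_def by (rule foldr_sum)

lemma ES_lin: "cond_exp_set d n \<rho> S (\<lambda>a b. r * X a b + s * Z a b) =
   (\<lambda>a b. r * cond_exp_set d n \<rho> S X a b + s * cond_exp_set d n \<rho> S Z a b)"
  unfolding cond_exp_set_def by (rule foldr_lin)

lemma ES_zero: "cond_exp_set d n \<rho> S (\<lambda>a b. 0) = (\<lambda>a b. 0)"
  unfolding cond_exp_set_def by (rule foldr_zero)

lemma foldr_insort:
  assumes "\<forall>j\<in>set xs. j < n" "i < n"
  shows "foldr (cond_exp d n \<rho>) (insort i xs) Y = cond_exp d n \<rho> i (foldr (cond_exp d n \<rho>) xs Y)"
  using assms
proof (induction xs)
  case Nil
  then show ?case by simp
next
  case (Cons x xs)
  then show ?case by (auto simp: E_commute)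
qed

lemma ES_insert:
  assumes "finite S" "S \<subseteq> {..<n}" "i < n" "i \<notin> S"
  shows "cond_exp_set d n \<rho> (insert i S) Y = cond_exp d n \<rho> i (cond_exp_set d n \<rho> S Y)"
  unfolding cond_exp_set_def
  using assms by (simp add: sorted_list_of_set_insert foldr_insort subset_iff)

lemma ES_commute:
  assumes "finite S" "S \<subseteq> {..<n}" "i < n"
  shows "cond_exp_set d n \<rho> S (cond_exp d n \<rho> i Y) = cond_exp d n \<rho> i (cond_exp_set d n \<rho> S Y)"
  using assms
proof (induction S rule: finite_induct)
  case empty
  then show ?case by (simp add: ES_empty)
next
  case (insert x S)
  then show ?case by (simp add: ES_insert E_commute)
qed

lemma ES_obs:
  assumes "finite S" "S \<subseteq> {..<n}" "observable d n X"
  shows "observable d n (cond_exp_set d n \<rho> S X)"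
  using assms
proof (induction S rule: finite_induct)
  case empty
  then show ?case by (simp add: ES_empty)
next
  case (insert x S)
  then show ?case by (simp add: ES_insert E_obs)
qed

lemma ES_aoo:
  assumes "finite S" "S \<subseteq> {..<n}" "is_op d n X"
  shows "acts_only_on d n ({..<n} - S) (cond_exp_set d n \<rho> S X)"
  using assms
proof (induction S rule: finite_induct)
  case empty
  then show ?case by (simp add: ES_empty aoo_full)
next
  case (insert x S)
  then have "acts_only_on d n ({..<n} - S - {x}) (cond_exp d n \<rho> x (cond_exp_set d n \<rho> S X))"
    by (intro aoo_E_in) auto
  moreover have "{..<n} - S - {x} = {..<n} - insert x S" by auto
  ultimately show ?case using insert by (simp add: ES_insert)
qed

lemma ES_fix:
  assumes "finite S" "S \<subseteq> {..<n}" "acts_only_on d n J Z" "S \<inter> J = {}"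
  shows "cond_exp_set d n \<rho> S Z = Z"
  using assms
proof (induction S rule: finite_induct)
  case empty
  then show ?case by (simp add: ES_empty)
next
  case (insert x S)
  then show ?case using aoo_E_notin[of x J Z] by (simp add: ES_insert)
qed

lemma ES_kill:
  assumes "finite S" "S \<subseteq> {..<n}" "j \<in> S" "cond_exp d n \<rho> j Z = (\<lambda>a b. 0)"
  shows "cond_exp_set d n \<rho> S Z = (\<lambda>a b. 0)"
proof -
  have S: "S = insert j (S - {j})" using assms by auto
  have "cond_exp_set d n \<rho> S Z = cond_exp d n \<rho> j (cond_exp_set d n \<rho> (S - {j}) Z)"
    using assms by (subst S) (rule ES_insert, auto)
  also have "\<dots> = cond_exp_set d n \<rho> (S - {j}) (cond_exp d n \<rho> j Z)"
    using assms by (subst ES_commute) auto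
  also have "\<dots> = (\<lambda>a b. 0)" using assms(4) by (simp add: ES_zero)
  finally show ?thesis .
qed


lemma decomp:
  assumes j: "j < n"
  shows "(\<Sum>a\<in>idx d n. f a) = (\<Sum>a\<in>{a\<in>idx d n. a j = 0}. \<Sum>x<d j. f (a(j:=x)))"
proof -
  let ?T = "{a\<in>idx d n. a j = 0}"
  have inj: "inj_on (\<lambda>(a,x). a(j:=x)) (?T \<times> {..<d j})"
  proof (rule inj_onI)
    fix p q assume p: "p \<in> ?T \<times> {..<d j}" and q: "q \<in> ?T \<times> {..<d j}"
      and e: "(\<lambda>(a,x). a(j:=x)) p = (\<lambda>(a,x). a(j:=x)) q"
    obtain a x where pa: "p = (a, x)" by (cases p)
    obtain a' x' where qa: "q = (a', x')" by (cases q)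
    have e': "a(j:=x) = a'(j:=x')" using e pa qa by simp
    have "x = x'" using fun_cong[OF e', of j] by simp
    moreover have "a = a'"
    proof
      fix m show "a m = a' m"
      proof (cases "m = j")
        case True then show ?thesis using p q pa qa by simp
      next
        case False then show ?thesis using fun_cong[OF e', of m] by simp
      qed
    qed
    ultimately show "p = q" using pa qa by simp
  qed
  have img: "(\<lambda>(a,x). a(j:=x)) ` (?T \<times> {..<d j}) = idx d n"
  proof
    show "(\<lambda>(a,x). a(j:=x)) ` (?T \<times> {..<d j}) \<subseteq> idx d n"
    proof
      fix b assume "b \<in> (\<lambda>(a,x). a(j:=x)) ` (?T \<times> {..<d j})"
      then obtain a x where "a \<in> ?T" "x < d j" "b = a(j:=x)" by auto
      then show "b \<in> idx d n" using j idx_upd by blast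
    qed
    show "idx d n \<subseteq> (\<lambda>(a,x). a(j:=x)) ` (?T \<times> {..<d j})"
    proof
      fix b assume b: "b \<in> idx d n"
      have "b j < d j" using b j unfolding idx_def by (auto simp: PiE_def Pi_def)
      moreover have "b(j:=0) \<in> ?T" using b j dpos[OF j] idx_upd by auto
      ultimately have "(b(j:=0), b j) \<in> ?T \<times> {..<d j}" by simp
      moreover have "b = (\<lambda>(a,x). a(j:=x)) (b(j:=0), b j)" by simp
      ultimately show "b \<in> (\<lambda>(a,x). a(j:=x)) ` (?T \<times> {..<d j})"
        by (rule rev_image_eqI)
    qed
  qed
  have bij: "bij_betw (\<lambda>(a,x). a(j:=x)) (?T \<times> {..<d j}) (idx d n)"
    unfolding bij_betw_def using inj img by blast
  have "(\<Sum>a\<in>?T. \<Sum>x<d j. f (a(j:=x))) = (\<Sum>(a,x)\<in>?T \<times> {..<d j}. f (a(j:=x)))"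
    by (rule sum.cartesian_product)
  also have "\<dots> = (\<Sum>a\<in>idx d n. f a)"
    using sum.reindex_bij_betw[OF bij, of f] by (simp add: case_prod_beta')
  finally show ?thesis by simp
qed

lemma triv_j:
  assumes "acts_only_on d n I A" "j < n" "j \<notin> I" "c \<in> idx d n" "b \<in> idx d n" "c j = 0" "b j = 0"
    "z < d j" "y < d j"
  shows "A (c(j:=z)) (b(j:=y)) = (if z = y then A c b else 0)"
proof -
  obtain Y where Y: "\<forall>a\<in>idx d n. \<forall>b\<in>idx d n. A a b = (if (\<forall>m\<in>{..<n} - I. a m = b m)
                 then Y (restrict a I) (restrict b I) else 0)"
    using assms(1) unfolding acts_only_on_def by blast
  have agr: "(\<forall>m\<in>{..<n} - I. (c(j:=z)) m = (b(j:=y)) m) \<longleftrightarrow> (z = y \<and> (\<forall>m\<in>{..<n} - I. c m = b m))"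
  proof
    assume h: "\<forall>m\<in>{..<n} - I. (c(j:=z)) m = (b(j:=y)) m"
    have jj: "j \<in> {..<n} - I" using assms(2,3) by simp
    have zy: "z = y" using h jj by force
    have "\<forall>m\<in>{..<n} - I. c m = b m"
    proof
      fix m assume m: "m \<in> {..<n} - I"
      show "c m = b m"
      proof (cases "m = j")
        case True then show ?thesis using assms(6,7) by simp
      next
        case False
        have "(c(j:=z)) m = (b(j:=y)) m" using h m by blast
        then show ?thesis using False by simp
      qed
    qed
    then show "z = y \<and> (\<forall>m\<in>{..<n} - I. c m = b m)" using zy by blast
  next
    assume h: "z = y \<and> (\<forall>m\<in>{..<n} - I. c m = b m)"
    show "\<forall>m\<in>{..<n} - I. (c(j:=z)) m = (b(j:=y)) m"
    proof
      fix m assume m: "m \<in> {..<n} - I"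
      show "(c(j:=z)) m = (b(j:=y)) m"
        using h m by (cases "m = j") simp_all
    qed
  qed
  have rs: "restrict (e(j:=l)) I = restrict e I" for e :: "nat \<Rightarrow> nat" and l
    using assms(3) by (auto simp: restrict_def intro!: ext)
  have c1: "c(j:=z) \<in> idx d n" by (rule idx_upd) (use assms in simp_all)
  have b1: "b(j:=y) \<in> idx d n" by (rule idx_upd) (use assms in simp_all)
  have "A (c(j:=z)) (b(j:=y)) = (if (\<forall>m\<in>{..<n} - I. (c(j:=z)) m = (b(j:=y)) m)
                 then Y (restrict (c(j:=z)) I) (restrict (b(j:=y)) I) else 0)" using Y c1 b1 by blast
  also have "\<dots> = (if z = y \<and> (\<forall>m\<in>{..<n} - I. c m = b m) then Y (restrict c I) (restrict b I) else 0)"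
    by (simp only: agr rs)
  also have "\<dots> = (if z = y then A c b else 0)"
  proof -
    have Acb: "A c b = (if (\<forall>m\<in>{..<n} - I. c m = b m) then Y (restrict c I) (restrict b I) else 0)"
      using Y assms(4,5) by blast
    show ?thesis unfolding Acb by simp
  qed
  finally show ?thesis .
qed

lemma prod_upd:
  assumes "j < n" "a \<in> idx d n" "b \<in> idx d n" "x < d j" "y < d j"
  shows "prod_state d n \<rho> (a(j:=x)) (b(j:=y)) = \<rho> j x y * (\<Prod>i\<in>{..<n}-{j}. \<rho> i (a i) (b i))"
proof -
  have "a(j:=x) \<in> idx d n" "b(j:=y) \<in> idx d n" using assms idx_upd by auto
  then have "prod_state d n \<rho> (a(j:=x)) (b(j:=y)) = (\<Prod>i<n. \<rho> i ((a(j:=x)) i) ((b(j:=y)) i))"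
    unfolding prod_state_def by simp
  also have "\<dots> = \<rho> j x y * (\<Prod>i\<in>{..<n}-{j}. \<rho> i ((a(j:=x)) i) ((b(j:=y)) i))"
    using assms(1) by (subst prod.remove[of _ j]) auto
  also have "(\<Prod>i\<in>{..<n}-{j}. \<rho> i ((a(j:=x)) i) ((b(j:=y)) i)) = (\<Prod>i\<in>{..<n}-{j}. \<rho> i (a i) (b i))"
    by (rule prod.cong) auto
  finally show ?thesis .
qed

lemma swap4b:
  "(\<Sum>x\<in>X. \<Sum>b\<in>B. \<Sum>y\<in>Y. \<Sum>c\<in>C. f x b y c) = (\<Sum>b\<in>B. \<Sum>c\<in>C. \<Sum>x\<in>X. \<Sum>y\<in>Y. f x b y c)"
proof -
  have "(\<Sum>x\<in>X. \<Sum>b\<in>B. \<Sum>y\<in>Y. \<Sum>c\<in>C. f x b y c) = (\<Sum>b\<in>B. \<Sum>x\<in>X. \<Sum>y\<in>Y. \<Sum>c\<in>C. f x b y c)"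
    by (rule sum.swap)
  also have "\<dots> = (\<Sum>b\<in>B. \<Sum>x\<in>X. \<Sum>c\<in>C. \<Sum>y\<in>Y. f x b y c)"
    by (rule sum.cong[OF refl], rule sum.cong[OF refl], rule sum.swap)
  also have "\<dots> = (\<Sum>b\<in>B. \<Sum>c\<in>C. \<Sum>x\<in>X. \<Sum>y\<in>Y. f x b y c)"
    by (rule sum.cong[OF refl], rule sum.swap)
  finally show ?thesis .
qed

lemma ortho_one:
  assumes j: "j < n" and A: "acts_only_on d n I A" "j \<notin> I"
    and B: "cond_exp d n \<rho> j B = (\<lambda>a b. 0)"
  shows "inner_state d n (prod_state d n \<rho>) A B = 0"
proof -
  let ?T = "{a\<in>idx d n. a j = 0}"
  let ?s = "prod_state d n \<rho>"
  let ?P = "\<lambda>a b. (\<Prod>i\<in>{..<n}-{j}. \<rho> i (a i) (b i))"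
  have "inner_state d n ?s A B =
     (\<Sum>a\<in>?T. \<Sum>x<d j. \<Sum>b\<in>?T. \<Sum>y<d j. \<Sum>c\<in>?T. \<Sum>z<d j.
        ?s (a(j:=x)) (b(j:=y)) * cnj (A (c(j:=z)) (b(j:=y))) * B (c(j:=z)) (a(j:=x)))"
    unfolding inner_state_def by (simp only: decomp[OF j])
  also have "\<dots> = (\<Sum>a\<in>?T. \<Sum>x<d j. \<Sum>b\<in>?T. \<Sum>y<d j. \<Sum>c\<in>?T.
        \<rho> j x y * ?P a b * cnj (A c b) * B (c(j:=y)) (a(j:=x)))"
  proof (intro sum.cong refl)
    fix a x b y c assume a: "a \<in> ?T" and x: "x \<in> {..<d j}" and b: "b \<in> ?T" and y: "y \<in> {..<d j}" and c: "c \<in> ?T"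
    have "(\<Sum>z<d j. ?s (a(j:=x)) (b(j:=y)) * cnj (A (c(j:=z)) (b(j:=y))) * B (c(j:=z)) (a(j:=x)))
        = (\<Sum>z<d j. if z = y then \<rho> j x y * ?P a b * cnj (A c b) * B (c(j:=z)) (a(j:=x)) else 0)"
    proof (rule sum.cong[OF refl])
      fix z assume z: "z \<in> {..<d j}"
      show "?s (a(j:=x)) (b(j:=y)) * cnj (A (c(j:=z)) (b(j:=y))) * B (c(j:=z)) (a(j:=x))
          = (if z = y then \<rho> j x y * ?P a b * cnj (A c b) * B (c(j:=z)) (a(j:=x)) else 0)"
      proof -
        have t: "A (c(j:=z)) (b(j:=y)) = (if z = y then A c b else 0)"
          by (rule triv_j[OF A(1) j A(2)]) (use b c y z in auto)
        have p: "?s (a(j:=x)) (b(j:=y)) = \<rho> j x y * ?P a b"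
          by (rule prod_upd[OF j]) (use a b x y in auto)
        show ?thesis unfolding t p by simp
      qed
    qed
    also have "\<dots> = \<rho> j x y * ?P a b * cnj (A c b) * B (c(j:=y)) (a(j:=x))"
      using y by (simp add: sum.delta)
    finally show "(\<Sum>z<d j. ?s (a(j:=x)) (b(j:=y)) * cnj (A (c(j:=z)) (b(j:=y))) * B (c(j:=z)) (a(j:=x)))
        = \<rho> j x y * ?P a b * cnj (A c b) * B (c(j:=y)) (a(j:=x))" .
  qed
  also have "\<dots> = (\<Sum>a\<in>?T. \<Sum>b\<in>?T. \<Sum>c\<in>?T. \<Sum>x<d j. \<Sum>y<d j.
        \<rho> j x y * ?P a b * cnj (A c b) * B (c(j:=y)) (a(j:=x)))"
    by (intro sum.cong refl swap4b)
  also have "\<dots> = 0"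
  proof -
  have "\<forall>a\<in>?T. \<forall>b\<in>?T. \<forall>c\<in>?T. (\<Sum>x<d j. \<Sum>y<d j. \<rho> j x y * ?P a b * cnj (A c b) * B (c(j:=y)) (a(j:=x))) = 0"
  proof (intro ballI)
    fix a b c assume a: "a \<in> ?T" and b: "b \<in> ?T" and c: "c \<in> ?T"
    have "(\<Sum>x<d j. \<Sum>y<d j. \<rho> j x y * ?P a b * cnj (A c b) * B (c(j:=y)) (a(j:=x)))
       = ?P a b * cnj (A c b) * (\<Sum>x<d j. \<Sum>y<d j. \<rho> j x y * B (c(j:=y)) (a(j:=x)))"
      by (simp add: sum_distrib_left mult_ac)
    moreover have "(\<Sum>x<d j. \<Sum>y<d j. \<rho> j x y * B (c(j:=y)) (a(j:=x))) = 0"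
    proof -
      have "cond_exp d n \<rho> j B c a = 0" using B by simp
      then show ?thesis using a c unfolding cond_exp_def by simp
    qed
    ultimately show "(\<Sum>x<d j. \<Sum>y<d j. \<rho> j x y * ?P a b * cnj (A c b) * B (c(j:=y)) (a(j:=x))) = 0" by simp
  qed
  note h = this
  show ?thesis by (rule sum.neutral, rule ballI, rule sum.neutral, rule ballI, rule sum.neutral, rule ballI) (use h in blast)
  qed
  finally show ?thesis .
qed

lemma state_herm: "cnj (prod_state d n \<rho> a b) = prod_state d n \<rho> b a"
  unfolding prod_state_def using herm' by (auto intro!: prod.cong)

lemma inner_cnj: "cnj (inner_state d n (prod_state d n \<rho>) Z Y) = inner_state d n (prod_state d n \<rho>) Y Z"
proof -
  have "cnj (inner_state d n (prod_state d n \<rho>) Z Y) =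
     (\<Sum>a\<in>idx d n. \<Sum>b\<in>idx d n. \<Sum>c\<in>idx d n. prod_state d n \<rho> b a * cnj (Y c a) * Z c b)"
    unfolding inner_state_def by (simp add: state_herm mult_ac)
  also have "\<dots> = inner_state d n (prod_state d n \<rho>) Y Z"
    unfolding inner_state_def by (rule sum.swap)
  finally show ?thesis .
qed


lemma obs_comb:
  assumes "\<forall>t\<in>A. observable d n (F t)" "\<forall>t\<in>A. cnj (c t) = c t"
  shows "observable d n (\<lambda>a b. \<Sum>t\<in>A. c t * F t a b)"
  unfolding observable_def
proof (intro conjI allI)
  show "is_op d n (\<lambda>a b. \<Sum>t\<in>A. c t * F t a b)"
    using assms(1) unfolding is_op_def observable_def by auto
  fix a b
  have "cnj (\<Sum>t\<in>A. c t * F t b a) = (\<Sum>t\<in>A. c t * F t a b)"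
    using assms obs_cnj by (simp cong: sum.cong)
  then show "(\<Sum>t\<in>A. c t * F t a b) = cnj (\<Sum>t\<in>A. c t * F t b a)" by simp
qed

lemma ES_is_op:
  assumes "finite S" "S \<subseteq> {..<n}" "is_op d n X"
  shows "is_op d n (cond_exp_set d n \<rho> S X)"
  using assms
proof (induction S rule: finite_induct)
  case empty
  then show ?case by (simp add: ES_empty)
next
  case (insert x S)
  then show ?case by (simp add: ES_insert E_is_op)
qed

lemma EES:
  assumes "j < n" "I \<subseteq> {..<n}" "is_op d n X"
  shows "cond_exp d n \<rho> j (cond_exp_set d n \<rho> ({..<n} - I) X) = cond_exp_set d n \<rho> ({..<n} - (I - {j})) X"
proof (cases "j \<in> I")
  case True
  have "{..<n} - (I - {j}) = insert j ({..<n} - I)" using True assms by auto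
  then show ?thesis using True assms by (simp add: ES_insert)
next
  case False
  have S: "{..<n} - I = insert j ({..<n} - I - {j})" using False assms by auto
  have e: "cond_exp_set d n \<rho> ({..<n} - I) Y = cond_exp d n \<rho> j (cond_exp_set d n \<rho> ({..<n} - I - {j}) Y)" for Y
    using assms by (subst S) (rule ES_insert, auto)
  have "cond_exp d n \<rho> j (cond_exp_set d n \<rho> ({..<n} - I) X) = cond_exp d n \<rho> j (cond_exp d n \<rho> j (cond_exp_set d n \<rho> ({..<n} - I - {j}) X))"
    by (simp add: e)
  also have "\<dots> = cond_exp d n \<rho> j (cond_exp_set d n \<rho> ({..<n} - I - {j}) X)"
    by (rule E_idem[OF assms(1) ES_is_op]) (use assms in auto)
  also have "\<dots> = cond_exp_set d n \<rho> ({..<n} - I) X" by (simp add: e)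
  finally show ?thesis using False by simp
qed

lemma fin_sub: "J \<subseteq> {..<n} \<Longrightarrow> finite J"
  using finite_subset by blast

lemma qes_obs:
  assumes "observable d n X" "J \<subseteq> {..<n}"
  shows "observable d n (qes d n \<rho> X J)"
  unfolding qes_def
  by (rule obs_comb) (use assms ES_obs in auto)

lemma qes_aoo:
  assumes "observable d n X" "J \<subseteq> {..<n}"
  shows "acts_only_on d n J (qes d n \<rho> X J)"
  unfolding qes_def
proof (rule aoo_comb)
  show "finite (Pow J)" using fin_sub[OF assms(2)] by simp
  show "\<forall>t\<in>Pow J. acts_only_on d n J (cond_exp_set d n \<rho> ({..<n} - t) X)"
  proof
    fix I assume I: "I \<in> Pow J"
    have "acts_only_on d n ({..<n} - ({..<n} - I)) (cond_exp_set d n \<rho> ({..<n} - I) X)"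
      by (rule ES_aoo) (use assms(1) in \<open>auto simp: observable_def\<close>)
    moreover have "{..<n} - ({..<n} - I) = I" using I assms(2) by auto
    ultimately show "acts_only_on d n J (cond_exp_set d n \<rho> ({..<n} - I) X)"
      using aoo_mono[of I _ J] I assms(2) by auto
  qed
qed

lemma qes_kill:
  assumes "observable d n X" "J \<subseteq> {..<n}" "j \<in> J"
  shows "cond_exp d n \<rho> j (qes d n \<rho> X J) = (\<lambda>a b. 0)"
proof (intro ext)
  fix a b
  have jn: "j < n" using assms by auto
  have "cond_exp d n \<rho> j (qes d n \<rho> X J) a b =
     (\<Sum>I\<in>Pow J. (-1)^card (J - I) * cond_exp d n \<rho> j (cond_exp_set d n \<rho> ({..<n} - I) X) a b)"
    unfolding qes_def by (simp add: E_sum)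
  also have "\<dots> = (\<Sum>I\<in>Pow J. (-1)^card (J - I) * cond_exp_set d n \<rho> ({..<n} - (I - {j})) X a b)"
    by (rule sum.cong[OF refl]) (use EES[OF jn] assms(1,2) in \<open>auto simp: observable_def\<close>)
  also have "\<dots> = 0"
    by (rule moebius_C[of J j "\<lambda>K. cond_exp_set d n \<rho> ({..<n} - K) X a b"]) (use fin_sub[OF assms(2)] assms(3) in auto)
  finally show "cond_exp d n \<rho> j (qes d n \<rho> X J) a b = 0" .
qed

lemma qes_partial:
  assumes "J \<subseteq> {..<n}"
  shows "(\<lambda>a b. \<Sum>I\<in>Pow J. qes d n \<rho> X I a b) = cond_exp_set d n \<rho> ({..<n} - J) X"
proof (intro ext)
  fix a b
  show "(\<Sum>I\<in>Pow J. qes d n \<rho> X I a b) = cond_exp_set d n \<rho> ({..<n} - J) X a b"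
    unfolding qes_def
    by (rule moebius_B[of J "\<lambda>K. cond_exp_set d n \<rho> ({..<n} - K) X a b"]) (use fin_sub[OF assms] in auto)
qed

lemma qes_sum:
  shows "X = (\<lambda>a b. \<Sum>J\<in>Pow {..<n}. qes d n \<rho> X J a b)"
  using qes_partial[of "{..<n}" X] by (simp add: ES_empty)

lemma qes_lin:
  "qes d n \<rho> (\<lambda>a b. of_real r * X a b + of_real s * Z a b) J =
   (\<lambda>a b. of_real r * qes d n \<rho> X J a b + of_real s * qes d n \<rho> Z J a b)"
  unfolding qes_def ES_lin
  by (intro ext) (simp add: sum.distrib sum_distrib_left algebra_simps)

lemma qes_unique:
  assumes X: "observable d n X"
    and Y: "\<forall>J. J \<subseteq> {..<n} \<longrightarrow> observable d n (Y J) \<and> acts_only_on d n J (Y J) \<and>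
          (\<forall>j\<in>J. cond_exp d n \<rho> j (Y J) = (\<lambda>a b. 0))"
    and XY: "X = (\<lambda>a b. \<Sum>J\<in>Pow {..<n}. Y J a b)"
    and K: "K \<subseteq> {..<n}"
  shows "Y K = qes d n \<rho> X K"
proof -
  have ES_X: "cond_exp_set d n \<rho> ({..<n} - I) X a b = (\<Sum>J\<in>Pow I. Y J a b)" if I: "I \<subseteq> {..<n}" for I a b
  proof -
    have "cond_exp_set d n \<rho> ({..<n} - I) X = (\<lambda>a b. \<Sum>J\<in>Pow {..<n}. 1 * cond_exp_set d n \<rho> ({..<n} - I) (Y J) a b)"
      unfolding XY using ES_sum[where S="{..<n} - I" and c="\<lambda>_. 1" and F=Y and A="Pow {..<n}"] by simp
    also have "\<dots> = (\<lambda>a b. \<Sum>J\<in>Pow {..<n}. if J \<in> Pow I then Y J a b else 0)"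
    proof (intro ext sum.cong refl)
      fix a b J assume J: "J \<in> Pow {..<n}"
      show "1 * cond_exp_set d n \<rho> ({..<n} - I) (Y J) a b = (if J \<in> Pow I then Y J a b else 0)"
      proof (cases "J \<subseteq> I")
        case True
        have "cond_exp_set d n \<rho> ({..<n} - I) (Y J) = Y J"
          by (rule ES_fix[of _ J]) (use Y J True in auto)
        then show ?thesis using True by simp
      next
        case False
        then obtain j where j: "j \<in> J" "j \<notin> I" by auto
        have "cond_exp_set d n \<rho> ({..<n} - I) (Y J) = (\<lambda>a b. 0)"
          by (rule ES_kill[of _ j]) (use Y J j in auto)
        then show ?thesis using False by simp
      qed
    qed
    also have "\<dots> = (\<lambda>a b. \<Sum>J\<in>Pow I. Y J a b)"
    proof (intro ext)
      fix a b
      have "(\<Sum>J\<in>Pow {..<n}. if J \<in> Pow I then Y J a b else 0) = (\<Sum>J\<in>Pow {..<n} \<inter> Pow I. Y J a b)"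
        by (rule sum.inter_restrict[symmetric]) simp
      also have "Pow {..<n} \<inter> Pow I = Pow I" using I by auto
      finally show "(\<Sum>J\<in>Pow {..<n}. if J \<in> Pow I then Y J a b else 0) = (\<Sum>J\<in>Pow I. Y J a b)" .
    qed
    finally show ?thesis by simp
  qed
  show ?thesis
  proof (intro ext)
    fix a b
    have "qes d n \<rho> X K a b = (\<Sum>I\<in>Pow K. (-1)^card (K - I) * (\<Sum>J\<in>Pow I. Y J a b))"
      unfolding qes_def by (rule sum.cong[OF refl]) (use ES_X K in auto)
    also have "\<dots> = Y K a b"
      by (rule moebius_A) (use fin_sub[OF K] in auto)
    finally show "Y K a b = qes d n \<rho> X K a b" by simp
  qed
qed

lemma qes_ortho:
  assumes "observable d n X" "I \<subseteq> {..<n}" "J \<subseteq> {..<n}" "I \<noteq> J"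
  shows "inner_state d n (prod_state d n \<rho>) (qes d n \<rho> X I) (qes d n \<rho> X J) = 0"
proof (cases "\<exists>j\<in>J. j \<notin> I")
  case True
  then obtain j where j: "j \<in> J" "j \<notin> I" by auto
  show ?thesis
    by (rule ortho_one[of j I]) (use j assms qes_aoo qes_kill in auto)
next
  case False
  then obtain i where i: "i \<in> I" "i \<notin> J" using assms(4) by blast
  have "inner_state d n (prod_state d n \<rho>) (qes d n \<rho> X J) (qes d n \<rho> X I) = 0"
    by (rule ortho_one[of i J]) (use i assms qes_aoo qes_kill in auto)
  then show ?thesis using inner_cnj[of "qes d n \<rho> X I" "qes d n \<rho> X J"] by simp
qed

end

theorem theorem6p9:
  fixes d :: "nat \<Rightarrow> nat" and n :: nat
    and \<rho> :: "nat \<Rightarrow> nat \<Rightarrow> nat \<Rightarrow> complex"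
  assumes states: "\<forall>i<n. density (d i) (\<rho> i)"
  shows "\<exists>D :: qop \<Rightarrow> nat set \<Rightarrow> qop.
    \<comment> \<open>existence: X = sum of X^{=J} with properties (1) and (2)\<close>
    (\<forall>X. observable d n X \<longrightarrow>
       (\<forall>J. J \<subseteq> {..<n} \<longrightarrow>
          observable d n (D X J) \<and> acts_only_on d n J (D X J) \<and>
          (\<forall>j\<in>J. cond_exp d n \<rho> j (D X J) = (\<lambda>a b. 0))) \<and>
       X = (\<lambda>a b. \<Sum>J\<in>Pow {..<n}. D X J a b)) \<and>
    \<comment> \<open>uniqueness\<close>
    (\<forall>X Y. observable d n X \<longrightarrow>
       (\<forall>J. J \<subseteq> {..<n} \<longrightarrow>
          observable d n (Y J) \<and> acts_only_on d n J (Y J) \<and>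
          (\<forall>j\<in>J. cond_exp d n \<rho> j (Y J) = (\<lambda>a b. 0))) \<longrightarrow>
       X = (\<lambda>a b. \<Sum>J\<in>Pow {..<n}. Y J a b) \<longrightarrow>
       (\<forall>J. J \<subseteq> {..<n} \<longrightarrow> Y J = D X J)) \<and>
    \<comment> \<open>(3) linearity and partial sums\<close>
    (\<forall>J. J \<subseteq> {..<n} \<longrightarrow>
       (\<forall>X Z (r::real) (s::real). observable d n X \<longrightarrow> observable d n Z \<longrightarrow>
          D (\<lambda>a b. of_real r * X a b + of_real s * Z a b) J =
          (\<lambda>a b. of_real r * D X J a b + of_real s * D Z J a b)) \<and>
       (\<forall>X. observable d n X \<longrightarrow>
          (\<lambda>a b. \<Sum>I\<in>Pow J. D X I a b) = cond_exp_set d n \<rho> ({..<n} - J) X)) \<and>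
    \<comment> \<open>(4) orthogonality\<close>
    (\<forall>X I J. observable d n X \<longrightarrow> I \<subseteq> {..<n} \<longrightarrow> J \<subseteq> {..<n} \<longrightarrow> I \<noteq> J \<longrightarrow>
       inner_state d n (prod_state d n \<rho>) (D X I) (D X J) = 0)"
proof (intro exI[of _ "qes d n \<rho>"] conjI allI impI)
  fix X assume X: "observable d n X"
  fix J assume J: "J \<subseteq> {..<n}"
  show "observable d n (qes d n \<rho> X J)" by (rule qes_obs[OF states X J])
  show "acts_only_on d n J (qes d n \<rho> X J)" by (rule qes_aoo[OF states X J])
  show "\<forall>j\<in>J. cond_exp d n \<rho> j (qes d n \<rho> X J) = (\<lambda>a b. 0)"
    using qes_kill[OF states X J] by blast
next
  fix X assume X: "observable d n X"
  show "X = (\<lambda>a b. \<Sum>J\<in>Pow {..<n}. qes d n \<rho> X J a b)" by (rule qes_sum[OF states])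
next
  fix X Y J
  assume "observable d n X" "\<forall>J. J \<subseteq> {..<n} \<longrightarrow>
          observable d n (Y J) \<and> acts_only_on d n J (Y J) \<and>
          (\<forall>j\<in>J. cond_exp d n \<rho> j (Y J) = (\<lambda>a b. 0))"
    "X = (\<lambda>a b. \<Sum>J\<in>Pow {..<n}. Y J a b)" "J \<subseteq> {..<n}"
  then show "Y J = qes d n \<rho> X J" by (rule qes_unique[OF states])
next
  fix J X Z and r s :: real
  show "qes d n \<rho> (\<lambda>a b. of_real r * X a b + of_real s * Z a b) J =
          (\<lambda>a b. of_real r * qes d n \<rho> X J a b + of_real s * qes d n \<rho> Z J a b)"
    by (rule qes_lin[OF states])
next
  fix J X assume "J \<subseteq> {..<n}"
  then show "(\<lambda>a b. \<Sum>I\<in>Pow J. qes d n \<rho> X I a b) = cond_exp_set d n \<rho> ({..<n} - J) X"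
    by (rule qes_partial[OF states])
next
  fix X I J
  assume "observable d n X" "I \<subseteq> {..<n}" "J \<subseteq> {..<n}" "I \<noteq> J"
  then show "inner_state d n (prod_state d n \<rho>) (qes d n \<rho> X I) (qes d n \<rho> X J) = 0"
    by (rule qes_ortho[OF states])
qed

end
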